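(* Let $a\in\mathbb{C}$ with $0<|a|<1$, $M\in\mathbb{N}$ (a positive integer), and $\varphi(z)=az^M$. Define $\nu=\left\lfloor\frac{2-|a|}{1-|a|}\right\rfloor$ and $\mathcal{N}_M=\max\{1,\,M(\nu-1)|a|^{\nu-1}\}$. Then the operator norm of $D_\varphi$ acting on the Hilbert space $S^2$ is $\|D_\varphi\|=\mathcal{N}_M$.
   Context: $\mathbb{D}$ is the open unit disk. $S^2$ is the Hilbert space of analytic functions $f(z)=\sum_{n\ge0}a_nz^n$ on $\mathbb{D}$ with $\|f\|_{S^2}^2=|a_0|^2+\sum_{n\ge1}n^2|a_n|^2<\infty$ (equivalently $\|f\|_{S^2}^2=|f(0)|^2+\|f'\|_{H^2}^2$). $D_\varphi f=f'\circ\varphi$. *)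

theory Defs
  imports "HOL-Analysis.Analysis"
begin

definition taylor_coeff :: "(complex \<Rightarrow> complex) \<Rightarrow> nat \<Rightarrow> complex" where
  "taylor_coeff f n = (deriv ^^ n) f 0 / of_nat (fact n)"

definition in_S2 :: "(complex \<Rightarrow> complex) \<Rightarrow> bool" where
  "in_S2 f \<longleftrightarrow> f holomorphic_on ball 0 1 \<and>
     summable (\<lambda>n. (real n)^2 * (norm (taylor_coeff f n))^2)"

text \<open>The S^2 norm: ||f||^2 = |a_0|^2 + sum_{n>=1} n^2 |a_n|^2
  (the n = 0 term of the series vanishes).\<close>
definition S2_norm :: "(complex \<Rightarrow> complex) \<Rightarrow> real" where
  "S2_norm f = sqrt ((norm (f 0))^2 + (\<Sum>n. (real n)^2 * (norm (taylor_coeff f n))^2))"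

definition D_comp :: "(complex \<Rightarrow> complex) \<Rightarrow> (complex \<Rightarrow> complex) \<Rightarrow> (complex \<Rightarrow> complex)" where
  "D_comp \<phi> f = (\<lambda>z. deriv f (\<phi> z))"

definition S2_opnorm :: "((complex \<Rightarrow> complex) \<Rightarrow> (complex \<Rightarrow> complex)) \<Rightarrow> real" where
  "S2_opnorm T = Sup {S2_norm (T f) | f. in_S2 f \<and> S2_norm f \<le> 1}"

end

theory Submission imports Defs "HOL-Complex_Analysis.Complex_Analysis" begin

lemma deriv_coeff: "taylor_coeff (deriv f) n = of_nat (Suc n) * taylor_coeff f (Suc n)"
proof -
  have e1: "(deriv ^^ Suc n) f = (deriv ^^ n) (deriv f)" unfolding funpow_Suc_right o_def ..
  have e2: "(of_nat (fact (Suc n)) :: complex) = of_nat (Suc n) * of_nat (fact n)"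
    by (simp only: fact_Suc of_nat_mult) simp
  have nz: "(of_nat (Suc n) :: complex) \<noteq> 0"
    by (simp only: of_nat_eq_0_iff)
  have aux: "\<And>c X F. (c::complex) \<noteq> 0 \<Longrightarrow> X / F = c * (X / (c * F))" by simp
  have "taylor_coeff f (Suc n) = (deriv ^^ n) (deriv f) 0 / (of_nat (Suc n) * of_nat (fact n))"
    unfolding taylor_coeff_def e1 e2 ..
  moreover have "taylor_coeff (deriv f) n = (deriv ^^ n) (deriv f) 0 / of_nat (fact n)"
    unfolding taylor_coeff_def ..
  moreover have "(deriv ^^ n) (deriv f) 0 / of_nat (fact n) = of_nat (Suc n) * ((deriv ^^ n) (deriv f) 0 / (of_nat (Suc n) * of_nat (fact n)))"
    by (rule aux[OF nz])
  ultimately show ?thesis by (simp only:)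
qed

lemma series_coeff:
  assumes "\<And>z. z \<in> ball 0 1 \<Longrightarrow> (\<lambda>j. b j * z^j) sums g z"
  shows "taylor_coeff g j = b j"
proof -
  have "summable (\<lambda>j. b j * (1/2::complex)^j)" using assms[of "1/2"] by (auto simp: sums_iff)
  hence "conv_radius b \<ge> norm (1/2::complex)" by (rule conv_radius_geI)
  hence r: "fps_conv_radius (Abs_fps b) > 0"
    unfolding fps_conv_radius_def fps_nth_Abs_fps by (rule order_less_le_trans[rotated]) simp
  have ev: "eventually (\<lambda>z. z \<in> ball (0::complex) 1) (nhds 0)"
    by (intro eventually_nhds_in_open) auto
  have "eventually (\<lambda>z. eval_fps (Abs_fps b) z = g z) (nhds 0)"
    using ev by eventually_elim (use assms in \<open>auto simp: eval_fps_def sums_iff\<close>)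
  hence "g has_fps_expansion Abs_fps b" using r by (simp add: has_fps_expansion_def)
  from fps_nth_fps_expansion[OF this, of j] show ?thesis by (simp add: taylor_coeff_def)
qed

lemma taylor_sums:
  assumes "f holomorphic_on ball 0 1" "z \<in> ball 0 1"
  shows "(\<lambda>n. taylor_coeff f n * z^n) sums f z"
  using holomorphic_power_series[OF assms] by (simp add: taylor_coeff_def)

lemma comp_coeff:
  fixes a :: complex
  assumes h: "h holomorphic_on ball 0 1" and a: "norm a \<le> 1" and M: "M \<ge> 1"
  shows "taylor_coeff (\<lambda>z. h (a * z^M)) j =
     (if M dvd j then a^(j div M) * taylor_coeff h (j div M) else 0)"
proof (rule series_coeff)
  fix z :: complex assume z: "z \<in> ball 0 1"
  have "norm (a * z^M) = norm a * norm z ^ M" by (simp add: norm_mult norm_power)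
  also have "\<dots> < 1"
  proof -
    have "norm z ^ M < 1" using z M by (simp add: power_less_one_iff)
    hence "norm a * norm z ^ M \<le> norm z ^ M" using a by (simp add: mult_left_le_one_le)
    with \<open>norm z ^ M < 1\<close> show ?thesis by linarith
  qed
  finally have w: "a * z^M \<in> ball 0 1" by simp
  have sm: "strict_mono (\<lambda>n. M * n)" using M by (auto simp: strict_mono_def)
  let ?f = "\<lambda>j. (if M dvd j then a^(j div M) * taylor_coeff h (j div M) else 0) * z^j"
  have eq: "?f (M * n) = taylor_coeff h n * (a * z^M)^n" for n
    using M by (simp add: power_mult_distrib power_mult)
  have "(\<lambda>n. ?f (M * n)) sums h (a * z^M)"
    unfolding eq by (rule taylor_sums[OF h w])
  thus "?f sums h (a * z^M)"
    by (subst (asm) sums_mono_reindex[OF sm]) (auto simp: dvd_def)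
qed

lemma maps_ball:
  fixes a z :: complex
  assumes "norm a \<le> 1" "M \<ge> 1" "z \<in> ball 0 1"
  shows "a * z^M \<in> ball 0 1"
proof -
  have "norm (a * z^M) = norm a * norm z ^ M" by (simp add: norm_mult norm_power)
  also have "\<dots> < 1"
  proof -
    have "norm z ^ M < 1" using assms by (simp add: power_less_one_iff)
    hence "norm a * norm z ^ M \<le> norm z ^ M" using assms by (simp add: mult_left_le_one_le)
    with \<open>norm z ^ M < 1\<close> show ?thesis by linarith
  qed
  finally show ?thesis by simp
qed

definition tt :: "(complex \<Rightarrow> complex) \<Rightarrow> nat \<Rightarrow> real" where
  "tt f n = (real (Suc n))^2 * (norm (taylor_coeff f (Suc n)))^2"

definition ww :: "complex \<Rightarrow> nat \<Rightarrow> nat \<Rightarrow> real" where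
  "ww a M n = (if n = 0 then 1 else (real M * real n * norm a ^ n)^2)"

lemma tt_summable: "in_S2 f \<Longrightarrow> summable (tt f)"
proof -
  assume f: "in_S2 f"
  let ?g = "\<lambda>n. (real n)^2 * (norm (taylor_coeff f n))^2"
  have s: "summable ?g" using f by (simp add: in_S2_def)
  have "summable (\<lambda>n. ?g (Suc n))" by (rule summable_Suc_iff[THEN iffD2, OF s])
  thus ?thesis unfolding tt_def by simp
qed

lemma tt_sum: "in_S2 f \<Longrightarrow> (\<Sum>n. tt f n) \<le> (S2_norm f)^2"
proof -
  assume f: "in_S2 f"
  let ?g = "\<lambda>n. (real n)^2 * (norm (taylor_coeff f n))^2"
  have s: "summable ?g" using f by (simp add: in_S2_def)
  have "(\<Sum>n. tt f n) = suminf ?g - ?g 0"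
    unfolding tt_def using suminf_split_head[OF s] by simp
  also have "\<dots> = suminf ?g" by simp
  also have "\<dots> \<le> (norm (f 0))^2 + suminf ?g" by simp
  also have "\<dots> = (S2_norm f)^2" unfolding S2_norm_def
    by (subst real_sqrt_pow2) (auto intro!: add_nonneg_nonneg suminf_nonneg s)
  finally show ?thesis .
qed

lemma formula:
  fixes a :: complex
  assumes f: "in_S2 f" and a: "norm a \<le> 1" and M: "M \<ge> 1" and B: "\<And>n. ww a M n \<le> B"
  shows "in_S2 (D_comp (\<lambda>z. a * z^M) f) \<and> summable (\<lambda>n. ww a M n * tt f n)
     \<and> (S2_norm (D_comp (\<lambda>z. a * z^M) f))^2 = (\<Sum>n. ww a M n * tt f n)"
proof -
  let ?T = "D_comp (\<lambda>z. a * z^M) f"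
  have hf: "f holomorphic_on ball 0 1" using f by (simp add: in_S2_def)
  have hd: "deriv f holomorphic_on ball 0 1" by (rule holomorphic_deriv[OF hf]) auto
  have T: "?T = (\<lambda>z. deriv f (a * z^M))" by (simp add: D_comp_def)
  have hT: "?T holomorphic_on ball 0 1"
  proof -
    have "(deriv f \<circ> (\<lambda>z. a * z^M)) holomorphic_on ball 0 1"
      by (rule holomorphic_on_compose_gen[OF _ hd]) (auto intro!: holomorphic_intros maps_ball a M)
    thus ?thesis by (simp add: T o_def)
  qed
  have cT: "taylor_coeff ?T j = (if M dvd j then a^(j div M) * (of_nat (Suc (j div M)) * taylor_coeff f (Suc (j div M))) else 0)" for j
    unfolding T comp_coeff[OF hd a M] deriv_coeff ..
  define g where "g j = (real j)^2 * (norm (taylor_coeff ?T j))^2" for j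
  define u where "u n = (if n = 0 then 0 else ww a M n * tt f n)" for n
  have sm: "strict_mono (\<lambda>n. M * n)" using M by (auto simp: strict_mono_def)
  have gfun: "g = (\<lambda>j. (real j)^2 * (norm (taylor_coeff ?T j))^2)" by (rule ext) (simp add: g_def)
  have zero: "\<And>j. j \<notin> range (\<lambda>n. M * n) \<Longrightarrow> g j = 0"
    by (auto simp: g_def cT dvd_def)
  have gu: "g (M * n) = u n" for n
    using M by (simp add: g_def cT u_def ww_def tt_def norm_mult norm_power power_mult_distrib norm_of_nat del: of_nat_Suc)
  have st: "summable (tt f)" by (rule tt_summable[OF f])
  have tnn: "tt f n \<ge> 0" for n by (simp add: tt_def)
  have B0: "0 \<le> B" using B[of 0] by (simp add: ww_def)
  have wnn: "ww a M n \<ge> 0" for n by (simp add: ww_def)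
  have ab: "\<bar>ww a M n * tt f n\<bar> \<le> B * tt f n" for n
    using B[of n] wnn[of n] tnn[of n] by (simp add: abs_of_nonneg mult_right_mono)
  have swt: "summable (\<lambda>n. ww a M n * tt f n)"
    by (rule summable_comparison_test[where g="\<lambda>n. B * tt f n"])
       (auto intro!: exI[of _ 0] ab summable_mult st)
  have su: "summable u"
    by (rule summable_comparison_test[OF _ swt]) (auto simp: u_def intro!: exI[of _ 0] mult_nonneg_nonneg tnn wnn)
  have gu': "(\<lambda>n. g (M * n)) = u" using gu by auto
  have sg: "summable g"
    using su summable_mono_reindex[of "\<lambda>n. M*n" g, OF sm zero] unfolding gu' by simp
  have sgeq: "suminf g = suminf u"
    using suminf_mono_reindex[of "\<lambda>n. M*n" g, OF sm zero] unfolding gu' by simp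
  have T0: "?T 0 = taylor_coeff f 1"
  proof -
    have "?T 0 = deriv f 0" using M by (simp add: T power_0_left)
    also have "\<dots> = taylor_coeff (deriv f) 0" by (simp add: taylor_coeff_def)
    also have "\<dots> = taylor_coeff f 1" by (simp add: deriv_coeff)
    finally show ?thesis .
  qed
  have wt: "(\<lambda>n. ww a M n * tt f n) = (\<lambda>n. u n + (if n = 0 then tt f 0 else 0))"
    by (auto simp: u_def ww_def)
  have "(\<Sum>n. ww a M n * tt f n) = suminf u + tt f 0"
    unfolding wt by (subst suminf_add[symmetric]) (auto simp: su sums_unique[OF sums_single, symmetric])
  also have "\<dots> = (norm (?T 0))^2 + suminf g"
    by (simp add: sgeq T0 tt_def)
  also have "\<dots> = (S2_norm ?T)^2" unfolding S2_norm_def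
    by (subst real_sqrt_pow2) (auto intro!: add_nonneg_nonneg suminf_nonneg sg[unfolded gfun] simp: gfun)
  finally show ?thesis using hT sg swt by (simp add: in_S2_def gfun)
qed

lemma peak:
  fixes r :: real and k n :: nat
  assumes r: "0 < r" "r < 1" and k1: "real k - 1 \<le> r / (1 - r)" and k2: "r / (1 - r) < real k"
  shows "real n * r^n \<le> real k * r^k"
proof -
  have up: "real m * r^m \<le> real (Suc m) * r^(Suc m)" if "m < k" for m
  proof -
    have "real m \<le> r / (1 - r)" using that k1 by linarith
    hence "real m * (1 - r) \<le> r" using r by (simp add: field_simps)
    hence "real m \<le> real (Suc m) * r" by (simp add: algebra_simps)
    hence "real m * r^m \<le> (real (Suc m) * r) * r^m" using r by (intro mult_right_mono) auto
    thus ?thesis by (simp add: mult_ac)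
  qed
  have down: "real (Suc m) * r^(Suc m) \<le> real m * r^m" if "k \<le> m" for m
  proof -
    have "r / (1 - r) < real m" using that k2 by linarith
    hence "r < real m * (1 - r)" using r by (simp add: field_simps)
    hence "real (Suc m) * r \<le> real m" by (simp add: algebra_simps)
    hence "(real (Suc m) * r) * r^m \<le> real m * r^m" using r by (intro mult_right_mono) auto
    thus ?thesis by (simp add: mult_ac)
  qed
  show ?thesis
  proof (cases "n \<le> k")
    case True
    show ?thesis using True
    proof (induction k rule: dec_induct)
      case base then show ?case by simp
    next
      case (step m) then show ?case using up[of m] by linarith
    qed
  next
    case False
    hence "k \<le> n" by simp
    thus ?thesis
    proof (induction n rule: dec_induct)
      case base then show ?case by simp
    next
      case (step m) then show ?case using down[of m] by linarith
    qed
  qed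
qed

definition fk :: "nat \<Rightarrow> complex \<Rightarrow> complex" where
  "fk k = (\<lambda>z. z^(Suc k) / of_nat (Suc k))"

lemma fk_coeff: "taylor_coeff (fk k) j = (if j = Suc k then 1 / of_nat (Suc k) else 0)"
proof (rule series_coeff)
  fix z :: complex
  have "(\<lambda>j. if j = Suc k then z^j / of_nat (Suc k) else 0) sums (z^(Suc k) / of_nat (Suc k))"
    by (rule sums_single)
  moreover have "(\<lambda>j. (if j = Suc k then 1 / of_nat (Suc k) else 0) * z^j) = (\<lambda>j. if j = Suc k then z^j / of_nat (Suc k) else 0)"
    by auto
  ultimately show "(\<lambda>j. (if j = Suc k then 1 / of_nat (Suc k) else 0) * z^j) sums fk k z"
    by (simp add: fk_def)
qed

lemma fk_S2: "in_S2 (fk k) \<and> S2_norm (fk k) = 1 \<and> tt (fk k) = (\<lambda>n. if n = k then 1 else 0)"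
proof -
  have one: "(real (Suc k))^2 * (1/real (Suc k))^2 = 1" by (simp add: power_divide del: of_nat_Suc)
  have g: "(\<lambda>n. (real n)^2 * (norm (taylor_coeff (fk k) n))^2) = (\<lambda>n. if n = Suc k then 1 else 0)"
    by (rule ext) (simp add: fk_coeff norm_divide one del: of_nat_Suc)
  have h: "fk k holomorphic_on ball 0 1" unfolding fk_def by (intro holomorphic_intros) auto
  have s: "(\<Sum>n. (real n)^2 * (norm (taylor_coeff (fk k) n))^2) = 1"
    unfolding g using sums_unique[OF sums_single[of "Suc k" "\<lambda>_. 1::real"]] by simp
  have t: "tt (fk k) = (\<lambda>n. if n = k then 1 else 0)"
    by (rule ext) (simp add: tt_def fk_coeff norm_divide one del: of_nat_Suc)
  show ?thesis using h s t unfolding in_S2_def S2_norm_def g by (simp add: fk_def)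
qed

lemma S2_nonneg: "in_S2 f \<Longrightarrow> S2_norm f \<ge> 0"
  unfolding S2_norm_def in_S2_def by (auto intro!: add_nonneg_nonneg suminf_nonneg)

theorem theorem5p1:
  fixes a :: complex and M :: nat
  assumes "0 < norm a" and "norm a < 1" and "M \<ge> 1"
  defines "\<nu> \<equiv> \<lfloor>(2 - norm a) / (1 - norm a)\<rfloor>"
  defines "N \<equiv> max 1 (real M * real_of_int (\<nu> - 1) * norm a ^ nat (\<nu> - 1))"
  shows "(\<forall>f. in_S2 f \<longrightarrow> in_S2 (D_comp (\<lambda>z. a * z ^ M) f))
     \<and> bdd_above {S2_norm (D_comp (\<lambda>z. a * z ^ M) f) | f. in_S2 f \<and> S2_norm f \<le> 1}
     \<and> S2_opnorm (D_comp (\<lambda>z. a * z ^ M)) = N"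
proof -
  let ?r = "norm a"
  let ?T = "D_comp (\<lambda>z. a * z ^ M)"
  have r0: "0 < ?r" and r1: "?r < 1" and M1: "M \<ge> 1" using assms by auto
  define x where "x = ?r / (1 - ?r)"
  have x0: "x \<ge> 0" using r0 r1 by (simp add: x_def)
  have e: "(2 - ?r)/(1 - ?r) = x + 2" using r1 by (simp add: x_def field_simps)
  have fl: "real_of_int \<nu> \<le> x + 2" "x + 2 < real_of_int \<nu> + 1"
    unfolding \<nu>_def e using floor_correct[of "x+2"] by auto
  have nu2: "\<nu> \<ge> 2" using fl x0 by linarith
  define k where "k = nat (\<nu> - 1)"
  have rk: "real k = real_of_int \<nu> - 1" using nu2 by (simp add: k_def)
  have k1: "real k - 1 \<le> x" and k2: "x < real k" using fl rk by linarith+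
  have kpos: "k \<ge> 1" using nu2 k_def by linarith
  have pk: "real n * ?r^n \<le> real k * ?r^k" for n
    by (rule peak[OF r0 r1]) (use k1 k2 in \<open>auto simp: x_def\<close>)
  define N' where "N' = real M * real k * ?r^k"
  have NN: "N = max 1 N'" unfolding N_def N'_def k_def
    using nu2 by (simp add: of_nat_nat)
  have N1: "N \<ge> 1" unfolding NN by simp
  have N'0: "N' \<ge> 0" unfolding N'_def by simp
  have wB: "ww a M n \<le> N^2" for n
  proof (cases "n = 0")
    case True thus ?thesis using N1 by (simp add: ww_def one_le_power)
  next
    case False
    have "real M * real n * ?r^n \<le> N'" unfolding N'_def
      using pk[of n] by (simp add: mult.assoc mult_left_mono)
    hence "(real M * real n * ?r^n)^2 \<le> N'^2" by (intro power_mono) auto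
    also have "\<dots> \<le> N^2" unfolding NN using N'0 by (intro power_mono) auto
    finally show ?thesis using False by (simp add: ww_def)
  qed
  have bound: "in_S2 (?T f) \<and> S2_norm (?T f) \<le> N * S2_norm f" if f: "in_S2 f" for f
  proof -
    note F = formula[OF f _ M1 wB] 
    have F: "in_S2 (?T f)" "summable (\<lambda>n. ww a M n * tt f n)"
      "(S2_norm (?T f))^2 = (\<Sum>n. ww a M n * tt f n)" using F r1 by auto
    have st: "summable (tt f)" by (rule tt_summable[OF f])
    have tnn: "tt f n \<ge> 0" for n by (simp add: tt_def)
    have "(S2_norm (?T f))^2 \<le> (\<Sum>n. N^2 * tt f n)"
      unfolding F(3) by (rule suminf_le) (auto intro!: mult_right_mono wB tnn F(2) summable_mult st)
    also have "\<dots> = N^2 * (\<Sum>n. tt f n)" by (rule suminf_mult[OF st])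
    also have "\<dots> \<le> N^2 * (S2_norm f)^2" by (intro mult_left_mono tt_sum[OF f]) auto
    also have "\<dots> = (N * S2_norm f)^2" by (simp add: power_mult_distrib)
    finally have "(S2_norm (?T f))^2 \<le> (N * S2_norm f)^2" .
    moreover have "N * S2_norm f \<ge> 0" using N1 S2_nonneg[OF f] by simp
    ultimately show ?thesis using F(1) by (auto intro: power2_le_imp_le)
  qed
  define S where "S = {S2_norm (?T f) | f. in_S2 f \<and> S2_norm f \<le> 1}"
  have le: "y \<le> N" if "y \<in> S" for y
  proof -
    from that obtain f where f: "in_S2 f" "S2_norm f \<le> 1" and y: "y = S2_norm (?T f)"
      unfolding S_def by auto
    have "y \<le> N * S2_norm f" using bound[OF f(1)] y by simp
    also have "\<dots> \<le> N * 1" using f(2) N1 by (intro mult_left_mono) auto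
    finally show ?thesis by simp
  qed
  define k0 where "k0 = (if N' \<le> 1 then 0 else k)"
  have wk0: "ww a M k0 = N^2"
  proof (cases "N' \<le> 1")
    case True thus ?thesis by (simp add: k0_def ww_def NN max_def)
  next
    case False
    hence "k0 = k" "N = N'" by (auto simp: k0_def NN max_def)
    thus ?thesis using kpos by (simp add: ww_def N'_def)
  qed
  have mem: "N \<in> S"
  proof -
    have fk: "in_S2 (fk k0)" "S2_norm (fk k0) = 1" "tt (fk k0) = (\<lambda>n. if n = k0 then 1 else 0)"
      using fk_S2[of k0] by auto
    note F = formula[OF fk(1) _ M1 wB]
    have F: "in_S2 (?T (fk k0))"
      "(S2_norm (?T (fk k0)))^2 = (\<Sum>n. ww a M n * tt (fk k0) n)" using F r1 by auto
    have "(\<lambda>n. ww a M n * tt (fk k0) n) = (\<lambda>n. if n = k0 then ww a M n else 0)"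
      unfolding fk(3) by auto
    hence "(S2_norm (?T (fk k0)))^2 = ww a M k0"
      unfolding F(2) using sums_unique[OF sums_single[of k0 "ww a M"]] by simp
    hence "(S2_norm (?T (fk k0)))^2 = N^2" unfolding wk0 .
    hence "S2_norm (?T (fk k0)) = N"
      using S2_nonneg[OF F(1)] N1 by (simp add: power2_eq_iff_nonneg)
    thus ?thesis unfolding S_def using fk by force
  qed
  have "S2_opnorm ?T = N" unfolding S2_opnorm_def S_def[symmetric]
    by (rule cSup_eq_maximum[OF mem le])
  moreover have "bdd_above S" using le by (auto simp: bdd_above_def)
  ultimately show ?thesis using bound unfolding S_def by auto
qed

end
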